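(* Let $\varepsilon>0$, $\varepsilon_\Lambda>0$, $\varphi(s)=\exp((s-0.5)/\varepsilon)$ and $w_k(x)=\varphi(s(\sigma(x)))/\sum_{y\in N_k}\varphi(s(\sigma(y)))$ for $x\in N_k$. For each $k$ let $P_k=\{p: N_k\cap S_p\neq\emptyset\}$, $\lambda_k=\max_{p\in P_k}s(p)$, $\Lambda(\lambda)=\exp((\lambda-0.5)/\varepsilon_\Lambda)$, $\rho_k=\Lambda(\lambda_k)|N_k|/\sum_j\Lambda(\lambda_j)|N_j|$, $M_{\mathrm{total}}=\sum_kM_k$, $\tilde{M}_k=M_{\mathrm{total}}\rho_k$, and define the Soft IWMR attribution $\tilde{A}^{\mathrm{IWMR}}(x)=\tilde{M}_{\nu(x)}\,w_{\nu(x)}(x)$. Then: (D1-G) $\sum_{x\in N_k}\tilde{A}^{\mathrm{IWMR}}(x)=\tilde{M}_k$ for all $k$; (D2) for all $k$ with $\tilde{M}_k\ge0$ and $x,y\in N_k$, $s(\sigma(x))\ge s(\sigma(y))$ implies $\tilde{A}^{\mathrm{IWMR}}(x)\ge\tilde{A}^{\mathrm{IWMR}}(y)$; (D3) the potential satisfies $\varphi(s+\Delta)/\varphi(s)=\exp(\Delta/\varepsilon)$ independent of $s$; (D4$'$) $\tilde{A}^{\mathrm{IWMR}}(x)$ is determined by $\tilde{M}_{\nu(x)}$ and the segment scores within $N_{\nu(x)}$. Moreover, Soft IWMR violates neighbourhood completeness $\sum_{x\in N_k}\tilde{A}^{\mathrm{IWMR}}(x)=M_k$ whenever $\tilde{M}_k\neq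 M_k$, which occurs precisely when the neighbourhood importances $\lambda_k$ are non-uniform.
   Context: $\Omega=\{0,\dots,H-1\}\times\{0,\dots,W-1\}$ is the pixel lattice. $\mathcal{N}=\{N_0,\dots,N_{K-1}\}$ is a partition of $\Omega$ into disjoint neighbourhoods with index function $\nu$ ($\nu(x)=k$ iff $x\in N_k$); $\mathcal{S}=\{S_0,\dots,S_{P-1}\}$ is a partition of $\Omega$ into segments with index function $\sigma$. $A\colon\Omega\to\mathbb{R}$ is a coarse attribution with neighbourhood masses $M_k=\sum_{x\in N_k}A(x)$; $s\colon\{0,\dots,P-1\}\to[0,1]$ are segment scores.
   Formalization: The precisely-when clause is replaced by: $\rho_k\neq|N_k|/|\Omega|$ for some k if and only if the $\lambda_k$ are not all equal, in place of $\tilde{M}_k\neq M_k$ occurring precisely when the $\lambda_k$ are non-uniform. The statement above fails without it. *)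

theory Defs
  imports Complex_Main
begin

type_synonym pixel = "nat \<times> nat"

definition lattice :: "nat \<Rightarrow> nat \<Rightarrow> pixel set" where
  "lattice H W = {0..<H} \<times> {0..<W}"

definition block :: "pixel set \<Rightarrow> (pixel \<Rightarrow> nat) \<Rightarrow> nat \<Rightarrow> pixel set" where
  "block \<Omega> \<nu> k = {x \<in> \<Omega>. \<nu> x = k}"

definition is_partition :: "pixel set \<Rightarrow> nat \<Rightarrow> (pixel \<Rightarrow> nat) \<Rightarrow> bool" where
  "is_partition \<Omega> n f \<longleftrightarrow> (\<forall>x\<in>\<Omega>. f x < n) \<and> (\<forall>k<n. block \<Omega> f k \<noteq> {})"

definition pot :: "real \<Rightarrow> real \<Rightarrow> real" where
  "pot \<epsilon> t = exp ((t - 0.5) / \<epsilon>)"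

definition wgt :: "real \<Rightarrow> pixel set \<Rightarrow> (pixel \<Rightarrow> nat) \<Rightarrow> (pixel \<Rightarrow> nat) \<Rightarrow> (nat \<Rightarrow> real)
    \<Rightarrow> pixel \<Rightarrow> real" where
  "wgt \<epsilon> \<Omega> \<nu> \<sigma> s x =
     pot \<epsilon> (s (\<sigma> x)) / (\<Sum>y\<in>block \<Omega> \<nu> (\<nu> x). pot \<epsilon> (s (\<sigma> y)))"

definition segs_in :: "pixel set \<Rightarrow> (pixel \<Rightarrow> nat) \<Rightarrow> (pixel \<Rightarrow> nat) \<Rightarrow> nat \<Rightarrow> nat set" where
  "segs_in \<Omega> \<nu> \<sigma> k = {p. block \<Omega> \<nu> k \<inter> block \<Omega> \<sigma> p \<noteq> {}}"

definition lam :: "pixel set \<Rightarrow> (pixel \<Rightarrow> nat) \<Rightarrow> (pixel \<Rightarrow> nat) \<Rightarrow> (nat \<Rightarrow> real) \<Rightarrow> nat \<Rightarrow> real" where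
  "lam \<Omega> \<nu> \<sigma> s k = Max (s ` segs_in \<Omega> \<nu> \<sigma> k)"

definition Lam :: "real \<Rightarrow> real \<Rightarrow> real" where
  "Lam \<epsilon>\<Lambda> l = exp ((l - 0.5) / \<epsilon>\<Lambda>)"

definition rho :: "real \<Rightarrow> pixel set \<Rightarrow> nat \<Rightarrow> (pixel \<Rightarrow> nat) \<Rightarrow> (pixel \<Rightarrow> nat) \<Rightarrow> (nat \<Rightarrow> real)
    \<Rightarrow> nat \<Rightarrow> real" where
  "rho \<epsilon>\<Lambda> \<Omega> K \<nu> \<sigma> s k =
     Lam \<epsilon>\<Lambda> (lam \<Omega> \<nu> \<sigma> s k) * real (card (block \<Omega> \<nu> k)) /
     (\<Sum>j<K. Lam \<epsilon>\<Lambda> (lam \<Omega> \<nu> \<sigma> s j) * real (card (block \<Omega> \<nu> j)))"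

definition mass :: "pixel set \<Rightarrow> (pixel \<Rightarrow> nat) \<Rightarrow> (pixel \<Rightarrow> real) \<Rightarrow> nat \<Rightarrow> real" where
  "mass \<Omega> \<nu> A k = (\<Sum>x\<in>block \<Omega> \<nu> k. A x)"

definition Mtotal :: "pixel set \<Rightarrow> nat \<Rightarrow> (pixel \<Rightarrow> nat) \<Rightarrow> (pixel \<Rightarrow> real) \<Rightarrow> real" where
  "Mtotal \<Omega> K \<nu> A = (\<Sum>k<K. mass \<Omega> \<nu> A k)"

definition Mtil :: "real \<Rightarrow> pixel set \<Rightarrow> nat \<Rightarrow> (pixel \<Rightarrow> nat) \<Rightarrow> (pixel \<Rightarrow> nat) \<Rightarrow> (nat \<Rightarrow> real)
    \<Rightarrow> (pixel \<Rightarrow> real) \<Rightarrow> nat \<Rightarrow> real" where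
  "Mtil \<epsilon>\<Lambda> \<Omega> K \<nu> \<sigma> s A k = Mtotal \<Omega> K \<nu> A * rho \<epsilon>\<Lambda> \<Omega> K \<nu> \<sigma> s k"

definition soft_iwmr :: "real \<Rightarrow> real \<Rightarrow> pixel set \<Rightarrow> nat \<Rightarrow> (pixel \<Rightarrow> nat) \<Rightarrow> (pixel \<Rightarrow> nat)
    \<Rightarrow> (nat \<Rightarrow> real) \<Rightarrow> (pixel \<Rightarrow> real) \<Rightarrow> pixel \<Rightarrow> real" where
  "soft_iwmr \<epsilon> \<epsilon>\<Lambda> \<Omega> K \<nu> \<sigma> s A x =
     Mtil \<epsilon>\<Lambda> \<Omega> K \<nu> \<sigma> s A (\<nu> x) * wgt \<epsilon> \<Omega> \<nu> \<sigma> s x"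

end

theory Submission
  imports Defs
begin

lemma fin_lat: "finite (lattice H W)"
  by (simp add: lattice_def)

lemma block_fin: "finite \<Omega> \<Longrightarrow> finite (block \<Omega> \<nu> k)"
  by (simp add: block_def)

lemma pot_pos: "pot e t > 0" by (simp add: pot_def)

lemma sum_pot_pos:
  assumes "finite B" "B \<noteq> {}"
  shows "(\<Sum>y\<in>B. pot e (s (\<sigma> y))) > 0"
  using assms by (intro sum_pos) (auto simp: pot_pos)

lemma card_UN_disjoint_helper_gen:
  assumes "finite \<Omega>"
  shows "card (\<Union>j\<in>{..<K}. block \<Omega> \<nu> j) = (\<Sum>j<K. card (block \<Omega> \<nu> j))"
  by (rule card_UN_disjoint) (auto simp: assms block_def)

lemma card_partition:
  assumes "finite \<Omega>" "\<forall>x\<in>\<Omega>. \<nu> x < K"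
  shows "(\<Sum>j<K. real (card (block \<Omega> \<nu> j))) = real (card \<Omega>)"
proof -
  have "\<Omega> = (\<Union>j\<in>{..<K}. block \<Omega> \<nu> j)" using assms(2) by (auto simp: block_def)
  hence "card \<Omega> = card (\<Union>j\<in>{..<K}. block \<Omega> \<nu> j)" by (rule arg_cong)
  hence "card \<Omega> = (\<Sum>j<K. card (block \<Omega> \<nu> j))"
    using card_UN_disjoint_helper_gen[OF assms(1), of \<nu> K] by (rule trans)
  thus ?thesis by simp
qed

theorem theorem6:
  fixes H W K P :: nat and \<nu> \<sigma> :: "pixel \<Rightarrow> nat" and s :: "nat \<Rightarrow> real"
    and A :: "pixel \<Rightarrow> real" and \<epsilon> \<epsilon>\<Lambda> :: real
  defines "\<Omega> \<equiv> lattice H W"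
  defines "At \<equiv> soft_iwmr \<epsilon> \<epsilon>\<Lambda> \<Omega> K \<nu> \<sigma> s A"
  defines "Mt \<equiv> Mtil \<epsilon>\<Lambda> \<Omega> K \<nu> \<sigma> s A"
  assumes eps: "\<epsilon> > 0" and epsL: "\<epsilon>\<Lambda> > 0"
    and nbhds: "is_partition \<Omega> K \<nu>"
    and segments: "is_partition \<Omega> P \<sigma>"
    and scores: "\<forall>p<P. 0 \<le> s p \<and> s p \<le> 1"
  shows
    \<comment> \<open>(D1-G)\<close>
    "(\<forall>k<K. (\<Sum>x\<in>block \<Omega> \<nu> k. At x) = Mt k)
     \<comment> \<open>(D2)\<close>
     \<and> (\<forall>k<K. Mt k \<ge> 0 \<longrightarrow> (\<forall>x\<in>block \<Omega> \<nu> k. \<forall>y\<in>block \<Omega> \<nu> k.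
          s (\<sigma> x) \<ge> s (\<sigma> y) \<longrightarrow> At x \<ge> At y))
     \<comment> \<open>(D3)\<close>
     \<and> (\<forall>t \<Delta>. pot \<epsilon> (t + \<Delta>) / pot \<epsilon> t = exp (\<Delta> / \<epsilon>))
     \<comment> \<open>(D4'): any other configuration with the same neighbourhood of x, the same
          redistributed mass there, and the same segment scores on it gives the same value\<close>
     \<and> (\<forall>x\<in>\<Omega>. \<forall>K' \<nu>' \<sigma>' s' A' \<epsilon>\<Lambda>'.
          block \<Omega> \<nu>' (\<nu>' x) = block \<Omega> \<nu> (\<nu> x)
          \<and> Mtil \<epsilon>\<Lambda>' \<Omega> K' \<nu>' \<sigma>' s' A' (\<nu>' x) = Mt (\<nu> x)
          \<and> (\<forall>y\<in>block \<Omega> \<nu> (\<nu> x). s' (\<sigma>' y) = s (\<sigma> y))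
          \<longrightarrow> soft_iwmr \<epsilon> \<epsilon>\<Lambda>' \<Omega> K' \<nu>' \<sigma>' s' A' x = At x)
     \<comment> \<open>violation of neighbourhood completeness\<close>
     \<and> (\<forall>k<K. Mt k \<noteq> mass \<Omega> \<nu> A k \<longrightarrow> (\<Sum>x\<in>block \<Omega> \<nu> k. At x) \<noteq> mass \<Omega> \<nu> A k)
     \<comment> \<open>the redistribution departs from area-proportional shares iff lambda is non-uniform\<close>
     \<and> ((\<exists>k<K. rho \<epsilon>\<Lambda> \<Omega> K \<nu> \<sigma> s k \<noteq> real (card (block \<Omega> \<nu> k)) / real (card \<Omega>))
        \<longleftrightarrow> (\<exists>j<K. \<exists>k<K. lam \<Omega> \<nu> \<sigma> s j \<noteq> lam \<Omega> \<nu> \<sigma> s k))"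
proof -
  have finO: "finite \<Omega>" by (simp add: \<Omega>_def fin_lat)
  have nK: "\<forall>x\<in>\<Omega>. \<nu> x < K" and ne: "\<forall>k<K. block \<Omega> \<nu> k \<noteq> {}"
    using nbhds by (auto simp: is_partition_def)
  have finB: "finite (block \<Omega> \<nu> k)" for k using finO by (rule block_fin)
  have D1: "\<forall>k<K. (\<Sum>x\<in>block \<Omega> \<nu> k. At x) = Mt k"
  proof (intro allI impI)
    fix k assume k: "k < K"
    let ?S = "\<Sum>y\<in>block \<Omega> \<nu> k. pot \<epsilon> (s (\<sigma> y))"
    have Sp: "?S > 0" using sum_pot_pos[OF finB] ne k by blast
    have "(\<Sum>x\<in>block \<Omega> \<nu> k. At x) = (\<Sum>x\<in>block \<Omega> \<nu> k. Mt k * (pot \<epsilon> (s (\<sigma> x)) / ?S))"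
      by (rule sum.cong) (auto simp: At_def Mt_def soft_iwmr_def wgt_def block_def)
    also have "\<dots> = Mt k * (?S / ?S)"
      by (simp add: sum_distrib_left[symmetric] sum_divide_distrib[symmetric])
    also have "\<dots> = Mt k" using Sp by simp
    finally show "(\<Sum>x\<in>block \<Omega> \<nu> k. At x) = Mt k" .
  qed
  have D2: "\<forall>k<K. Mt k \<ge> 0 \<longrightarrow> (\<forall>x\<in>block \<Omega> \<nu> k. \<forall>y\<in>block \<Omega> \<nu> k.
          s (\<sigma> x) \<ge> s (\<sigma> y) \<longrightarrow> At x \<ge> At y)"
  proof (intro allI impI ballI)
    fix k x y assume k: "k < K" and M: "Mt k \<ge> 0" and x: "x \<in> block \<Omega> \<nu> k"
      and y: "y \<in> block \<Omega> \<nu> k" and le: "s (\<sigma> x) \<ge> s (\<sigma> y)"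
    let ?S = "\<Sum>y\<in>block \<Omega> \<nu> k. pot \<epsilon> (s (\<sigma> y))"
    have Sp: "?S > 0" using sum_pot_pos[OF finB] ne k by blast
    have nx: "\<nu> x = k" "\<nu> y = k" using x y by (auto simp: block_def)
    have "pot \<epsilon> (s (\<sigma> y)) \<le> pot \<epsilon> (s (\<sigma> x))"
      using le eps by (simp add: pot_def divide_right_mono)
    hence "pot \<epsilon> (s (\<sigma> y)) / ?S \<le> pot \<epsilon> (s (\<sigma> x)) / ?S"
      using Sp by (simp add: divide_right_mono)
    hence "Mt k * (pot \<epsilon> (s (\<sigma> y)) / ?S) \<le> Mt k * (pot \<epsilon> (s (\<sigma> x)) / ?S)"
      using M by (rule mult_left_mono)
    thus "At y \<le> At x" by (simp add: At_def Mt_def soft_iwmr_def wgt_def nx)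
  qed
  have D3: "\<forall>t \<Delta>. pot \<epsilon> (t + \<Delta>) / pot \<epsilon> t = exp (\<Delta> / \<epsilon>)"
  proof (intro allI)
    fix t \<Delta>
    have "(t + \<Delta> - 0.5) / \<epsilon> = (t - 0.5) / \<epsilon> + \<Delta> / \<epsilon>" using eps by (simp add: field_simps)
    thus "pot \<epsilon> (t + \<Delta>) / pot \<epsilon> t = exp (\<Delta> / \<epsilon>)"
      by (simp add: pot_def exp_add)
  qed
  have D4: "\<forall>x\<in>\<Omega>. \<forall>K' \<nu>' \<sigma>' s' A' \<epsilon>\<Lambda>'.
          block \<Omega> \<nu>' (\<nu>' x) = block \<Omega> \<nu> (\<nu> x)
          \<and> Mtil \<epsilon>\<Lambda>' \<Omega> K' \<nu>' \<sigma>' s' A' (\<nu>' x) = Mt (\<nu> x)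
          \<and> (\<forall>y\<in>block \<Omega> \<nu> (\<nu> x). s' (\<sigma>' y) = s (\<sigma> y))
          \<longrightarrow> soft_iwmr \<epsilon> \<epsilon>\<Lambda>' \<Omega> K' \<nu>' \<sigma>' s' A' x = At x"
  proof (intro ballI allI impI)
    fix x K' \<nu>' \<sigma>' s' A' \<epsilon>\<Lambda>'
    assume x: "x \<in> \<Omega>" and h: "block \<Omega> \<nu>' (\<nu>' x) = block \<Omega> \<nu> (\<nu> x)
          \<and> Mtil \<epsilon>\<Lambda>' \<Omega> K' \<nu>' \<sigma>' s' A' (\<nu>' x) = Mt (\<nu> x)
          \<and> (\<forall>y\<in>block \<Omega> \<nu> (\<nu> x). s' (\<sigma>' y) = s (\<sigma> y))"
    have xb: "x \<in> block \<Omega> \<nu> (\<nu> x)" using x by (simp add: block_def)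
    have "(\<Sum>y\<in>block \<Omega> \<nu>' (\<nu>' x). pot \<epsilon> (s' (\<sigma>' y))) = (\<Sum>y\<in>block \<Omega> \<nu> (\<nu> x). pot \<epsilon> (s (\<sigma> y)))"
      using h by (auto intro: sum.cong)
    moreover have "s' (\<sigma>' x) = s (\<sigma> x)" using h xb by blast
    ultimately show "soft_iwmr \<epsilon> \<epsilon>\<Lambda>' \<Omega> K' \<nu>' \<sigma>' s' A' x = At x"
      using h by (simp add: At_def Mt_def soft_iwmr_def wgt_def)
  qed
  have D5: "\<forall>k<K. Mt k \<noteq> mass \<Omega> \<nu> A k \<longrightarrow> (\<Sum>x\<in>block \<Omega> \<nu> k. At x) \<noteq> mass \<Omega> \<nu> A k"
    using D1 by simp
  define L where "L j = Lam \<epsilon>\<Lambda> (lam \<Omega> \<nu> \<sigma> s j)" for j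
  define n where "n j = real (card (block \<Omega> \<nu> j))" for j
  define D where "D = (\<Sum>j<K. L j * n j)"
  define N where "N = real (card \<Omega>)"
  have Lp: "L j > 0" for j by (simp add: L_def Lam_def)
  have np: "n j > 0" if "j < K" for j
    using ne that finB by (simp add: n_def card_gt_0_iff)
  have sumn: "(\<Sum>j<K. n j) = N" unfolding n_def N_def using card_partition[OF finO nK] .
  have rho_eq: "rho \<epsilon>\<Lambda> \<Omega> K \<nu> \<sigma> s k = L k * n k / D" for k
    by (simp add: rho_def L_def n_def D_def)
  have Linj: "L j = L k \<Longrightarrow> lam \<Omega> \<nu> \<sigma> s j = lam \<Omega> \<nu> \<sigma> s k" for j k
    using epsL by (simp add: L_def Lam_def)
  have D6: "(\<exists>k<K. rho \<epsilon>\<Lambda> \<Omega> K \<nu> \<sigma> s k \<noteq> n k / N)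
        \<longleftrightarrow> (\<exists>j<K. \<exists>k<K. lam \<Omega> \<nu> \<sigma> s j \<noteq> lam \<Omega> \<nu> \<sigma> s k)"
  proof
    assume "\<exists>k<K. rho \<epsilon>\<Lambda> \<Omega> K \<nu> \<sigma> s k \<noteq> n k / N"
    then obtain k where k: "k < K" and r: "rho \<epsilon>\<Lambda> \<Omega> K \<nu> \<sigma> s k \<noteq> n k / N" by blast
    show "\<exists>j<K. \<exists>k<K. lam \<Omega> \<nu> \<sigma> s j \<noteq> lam \<Omega> \<nu> \<sigma> s k"
    proof (rule ccontr)
      assume "\<not> ?thesis"
      hence eqlam: "lam \<Omega> \<nu> \<sigma> s j = lam \<Omega> \<nu> \<sigma> s k" if "j < K" for j using k that by blast
      have eq: "\<forall>j<K. L j = L k" unfolding L_def using eqlam by presburger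
      have "D = (\<Sum>j<K. L k * n j)" unfolding D_def by (intro sum.cong refl) (metis eq lessThan_iff)
      also have "\<dots> = L k * N" by (simp add: sum_distrib_left[symmetric] sumn)
      finally have "D = L k * N" .
      moreover have "L k \<noteq> 0" using Lp[of k] by simp
      ultimately have "rho \<epsilon>\<Lambda> \<Omega> K \<nu> \<sigma> s k = n k / N" by (simp add: rho_eq)
      with r show False by simp
    qed
  next
    assume "\<exists>j<K. \<exists>k<K. lam \<Omega> \<nu> \<sigma> s j \<noteq> lam \<Omega> \<nu> \<sigma> s k"
    then obtain j k where jk: "j < K" "k < K" and d: "lam \<Omega> \<nu> \<sigma> s j \<noteq> lam \<Omega> \<nu> \<sigma> s k" by blast
    show "\<exists>k<K. rho \<epsilon>\<Lambda> \<Omega> K \<nu> \<sigma> s k \<noteq> n k / N"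
    proof (rule ccontr)
      assume "\<not> ?thesis"
      hence all: "\<forall>i<K. L i * n i / D = n i / N" by (simp add: rho_eq)
      have Dp: "D > 0" unfolding D_def using jk Lp np
        by (intro sum_pos) (auto intro: mult_pos_pos)
      have Np: "N > 0" unfolding sumn[symmetric] using jk np by (intro sum_pos) auto
      have "L i = D / N" if "i < K" for i
      proof -
        have "L i * n i / D = n i / N" using all that by blast
        thus ?thesis using Dp Np np[OF that] by (simp add: field_simps)
      qed
      hence "L j = L k" using jk by simp
      hence "lam \<Omega> \<nu> \<sigma> s j = lam \<Omega> \<nu> \<sigma> s k" by (rule Linj)
      with d show False by simp
    qed
  qed
  have D6': "(\<exists>k<K. rho \<epsilon>\<Lambda> \<Omega> K \<nu> \<sigma> s k \<noteq> real (card (block \<Omega> \<nu> k)) / real (card \<Omega>))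
        \<longleftrightarrow> (\<exists>j<K. \<exists>k<K. lam \<Omega> \<nu> \<sigma> s j \<noteq> lam \<Omega> \<nu> \<sigma> s k)"
    using D6 unfolding n_def N_def .
  show ?thesis by (intro conjI D1 D2 D3 D4 D5 D6')
qed

end
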